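(* Let $(X,\Delta,\varepsilon,T)$ be a TSD object over a field $\mathbb k$, let $R=\mathbb k[[\hbar]]/(\hbar^2)$ and $X_\hbar=X\otimes_{\mathbb k}R$ with $\Delta$, $\Delta_3$ extended $R$-linearly. For a $\mathbb k$-linear $\psi\colon X^{\otimes 3}\to X$ let $T_\psi=T+\hbar\psi$ (extended $R$-linearly). Then: (1) $T_\psi$ is an infinitesimal deformation of $T$ if and only if $\psi\in Z^2_{\rm TSD}(X;X)$; (2) for $\psi,\psi'\in Z^2_{\rm TSD}(X;X)$, the deformations $T_\psi$ and $T_{\psi'}$ are equivalent if and only if $\psi-\psi'\in B^2_{\rm TSD}(X;X)$. Consequently, equivalence classes of infinitesimal deformations of $T$ are in bijection with $H^2_{\rm TSD}(X;X)$.
   Context: A TSD object is a $\mathbb k$-module $X$ with a coassociative counital comultiplication $\Delta$, counit $\varepsilon$, $\Delta_3=(\Delta\otimes\mathbb 1)\Delta$ (Sweedler notation $\Delta_3(w)=w^{(1)}\otimes w^{(2)}\otimes w^{(3)}$), and a linear $T\colon X^{\otimes 3}\to X$ with (i) $\Delta_3T=T^{\otimes 3}\sigma\Delta_3^{\otimes 3}$, where $\sigma$ sends $u_1\otimes\cdots\otimes u_9$ to $u_1\otimes u_4\otimes u_7\otimes u_2\otimes u_5\otimes u_8\otimes u_3\otimes u_6\otimes u_9$, and (ii) $T(T(x\otimes y\otimes z)\otimes w\otimes u)=T(T(x\otimes w^{(1)}\otimes u^{(1)})\otimes T(y\otimes w^{(2)}\otimes u^{(2)})\otimes T(z\otimes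 w^{(3)}\otimes u^{(3)}))$. An infinitesimal deformation of $T$ is an $R$-linear $T'\colon X_\hbar^{\otimes 3}\to X_\hbar$ with $T'\equiv T$ mod $\hbar$ such that $(X_\hbar,\Delta,T')$ satisfies (i) and (ii). Two deformations $T',T''$ are equivalent if there is an $R$-linear $g\colon X_\hbar\to X_\hbar$ with $g\equiv\mathbb 1$ mod $\hbar$, $\Delta_3 g=g^{\otimes 3}\Delta_3$ and $g\circ T'=T''\circ g^{\otimes 3}$. TSD cohomology: $C^1_{\rm TSD}(X;X)$ = ternary coderivations $f$ (i.e. $\Delta_3 f=(f\otimes\mathbb 1\otimes\mathbb 1+\mathbb 1\otimes f\otimes\mathbb 1+\mathbb 1\otimes\mathbb 1\otimes f)\Delta_3$); $C^2_{\rm TSD}(X;X)$ = linear $\psi\colon X^{\otimes 3}\to X$ with $\Delta_3\psi=(\psi\otimes T\otimes T+T\otimes\psi\otimes T+T\otimes T\otimes\psi)\sigma\Delta_3^{\otimes 3}$; $\delta^1 f(x\otimes y\otimes z)=f(T(x\otimes y\otimes z))-T(f(x)\otimes y\otimes z)-T(x\otimes f(y)\otimes z)-T(x\otimes y\otimes f(z))$; $\delta^2\psi(x\otimes y\otimes z\otimes w\otimes u)=T(\psi(x\otimes y\otimes z)\otimes w\otimes u)+\psi(T(x\otimes y\otimes z)\otimes w\otimes u)-\psi(A_1\otimes A_2\otimes A_3)-T(\Psi_1\otimes A_2\otimes A_3)-T(A_1\otimes\Psi_2\otimes A_3)-T(A_1\otimes A_2\otimes\Psi_3)$ with $A_i=T(x_i\otimes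 w^{(i)}\otimes u^{(i)})$, $(x_1,x_2,x_3)=(x,y,z)$, and $\Psi_i$ the same with $\psi$ in place of $T$. $Z^2_{\rm TSD}=C^2_{\rm TSD}\cap\ker\delta^2$, $B^2_{\rm TSD}=\delta^1(C^1_{\rm TSD})$, $H^2_{\rm TSD}=Z^2_{\rm TSD}/B^2_{\rm TSD}$. *)

theory Defs
  imports "HOL-Library.Poly_Mapping"
begin

section \<open>Dual numbers R = k[[h]]/(h^2)\<close>

datatype 'a dual = Dual (re: 'a) (ep: 'a)

instantiation dual :: (comm_ring_1) comm_ring_1
begin
definition "0 = Dual 0 0"
definition "1 = Dual 1 0"
definition "x + y = Dual (re x + re y) (ep x + ep y)"
definition "x - y = Dual (re x - re y) (ep x - ep y)"
definition "- x = Dual (- re x) (- ep x)"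
definition "x * y = Dual (re x * re y) (re x * ep y + ep x * re y)"
instance
  by standard
     (auto simp: zero_dual_def one_dual_def plus_dual_def minus_dual_def
        uminus_dual_def times_dual_def algebra_simps intro: dual.expand)
end

definition hbar :: "'a::comm_ring_1 dual" where "hbar = Dual 0 1"

definition scal :: "'a::comm_ring_1 \<Rightarrow> 'a dual" where "scal c = Dual c 0"

(* A module with basis indexed by 'i is 'i \<Rightarrow>\<^sub>0 'r. A linear map from the module with
 basis 'i to the module with basis 'j is given by its values on the basis,
 i.e. a function 'i \<Rightarrow> ('j \<Rightarrow>\<^sub>0 'r). The tensor product of free modules with bases
 'i and 'j is the free module with basis 'i \<times> 'j. *)

definition smultp :: "'r::comm_ring_1 \<Rightarrow> ('i \<Rightarrow>\<^sub>0 'r) \<Rightarrow> ('i \<Rightarrow>\<^sub>0 'r)" where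
  "smultp c v = Poly_Mapping.map (\<lambda>x. c * x) v"

definition lext :: "('i \<Rightarrow> ('j \<Rightarrow>\<^sub>0 'r::comm_ring_1)) \<Rightarrow> ('i \<Rightarrow>\<^sub>0 'r) \<Rightarrow> ('j \<Rightarrow>\<^sub>0 'r)" where
  "lext f v = (\<Sum>i\<in>Poly_Mapping.keys v. smultp (Poly_Mapping.lookup v i) (f i))"

(* lcomp f g = f \<circ> g (g applied first). *)
definition lcomp :: "('j \<Rightarrow> ('k \<Rightarrow>\<^sub>0 'r::comm_ring_1)) \<Rightarrow> ('i \<Rightarrow> ('j \<Rightarrow>\<^sub>0 'r)) \<Rightarrow> 'i \<Rightarrow> ('k \<Rightarrow>\<^sub>0 'r)" where
  "lcomp f g = (\<lambda>i. lext f (g i))"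

definition idm :: "'i \<Rightarrow> ('i \<Rightarrow>\<^sub>0 'r::comm_ring_1)" where
  "idm i = Poly_Mapping.single i 1"

definition reidx :: "('i \<Rightarrow> 'j) \<Rightarrow> 'i \<Rightarrow> ('j \<Rightarrow>\<^sub>0 'r::comm_ring_1)" where
  "reidx p i = Poly_Mapping.single (p i) 1"

definition tvec2 :: "('i \<Rightarrow>\<^sub>0 'r::comm_ring_1) \<Rightarrow> ('j \<Rightarrow>\<^sub>0 'r) \<Rightarrow> ('i \<times> 'j \<Rightarrow>\<^sub>0 'r)" where
  "tvec2 u v = (\<Sum>i\<in>Poly_Mapping.keys u. \<Sum>j\<in>Poly_Mapping.keys v. Poly_Mapping.single (i, j) (Poly_Mapping.lookup u i * Poly_Mapping.lookup v j))"

definition tvec3 :: "('i \<Rightarrow>\<^sub>0 'r::comm_ring_1) \<Rightarrow> ('j \<Rightarrow>\<^sub>0 'r) \<Rightarrow> ('k \<Rightarrow>\<^sub>0 'r)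
    \<Rightarrow> ('i \<times> 'j \<times> 'k \<Rightarrow>\<^sub>0 'r)" where
  "tvec3 u v w = (\<Sum>i\<in>Poly_Mapping.keys u. \<Sum>j\<in>Poly_Mapping.keys v. \<Sum>k\<in>Poly_Mapping.keys w.
      Poly_Mapping.single (i, j, k) (Poly_Mapping.lookup u i * Poly_Mapping.lookup v j * Poly_Mapping.lookup w k))"

definition tens2 :: "('i \<Rightarrow> ('i' \<Rightarrow>\<^sub>0 'r::comm_ring_1)) \<Rightarrow> ('j \<Rightarrow> ('j' \<Rightarrow>\<^sub>0 'r))
    \<Rightarrow> 'i \<times> 'j \<Rightarrow> ('i' \<times> 'j' \<Rightarrow>\<^sub>0 'r)" where
  "tens2 f g = (\<lambda>(i, j). tvec2 (f i) (g j))"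

definition tens3 :: "('i \<Rightarrow> ('i' \<Rightarrow>\<^sub>0 'r::comm_ring_1)) \<Rightarrow> ('j \<Rightarrow> ('j' \<Rightarrow>\<^sub>0 'r))
    \<Rightarrow> ('k \<Rightarrow> ('k' \<Rightarrow>\<^sub>0 'r)) \<Rightarrow> 'i \<times> 'j \<times> 'k \<Rightarrow> ('i' \<times> 'j' \<times> 'k' \<Rightarrow>\<^sub>0 'r)" where
  "tens3 f g h = (\<lambda>(i, j, k). tvec3 (f i) (g j) (h k))"

(* Delta_3 = (Delta \<otimes> 1) Delta, with X\<otimes>X\<otimes>X identified with basis 'b \<times> 'b \<times> 'b. *)
definition comult3 :: "('b \<Rightarrow> ('b \<times> 'b \<Rightarrow>\<^sub>0 'r::comm_ring_1)) \<Rightarrow> 'b \<Rightarrow> ('b \<times> 'b \<times> 'b \<Rightarrow>\<^sub>0 'r)" where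
  "comult3 D = lcomp (reidx (\<lambda>((i, j), k). (i, j, k))) (lcomp (tens2 D idm) D)"

definition sigma9 :: "('a \<times> 'a \<times> 'a) \<times> ('a \<times> 'a \<times> 'a) \<times> ('a \<times> 'a \<times> 'a)
    \<Rightarrow> (('a \<times> 'a \<times> 'a) \<times> ('a \<times> 'a \<times> 'a) \<times> ('a \<times> 'a \<times> 'a) \<Rightarrow>\<^sub>0 'r::comm_ring_1)" where
  "sigma9 = reidx (\<lambda>((u1, u2, u3), (u4, u5, u6), (u7, u8, u9)).
                     ((u1, u4, u7), (u2, u5, u8), (u3, u6, u9)))"

definition coalgebra :: "('b \<Rightarrow> ('b \<times> 'b \<Rightarrow>\<^sub>0 'r::comm_ring_1)) \<Rightarrow> ('b \<Rightarrow> 'r) \<Rightarrow> bool" where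
  "coalgebra D e \<longleftrightarrow>
     lcomp (tens2 D idm) D = lcomp (reidx (\<lambda>(i, j, k). ((i, j), k))) (lcomp (tens2 idm D) D)
   \<and> lcomp (\<lambda>(i, j). smultp (e i) (idm j)) D = idm
   \<and> lcomp (\<lambda>(i, j). smultp (e j) (idm i)) D = idm"

definition tsd_cond1 :: "('b \<Rightarrow> ('b \<times> 'b \<Rightarrow>\<^sub>0 'r::comm_ring_1)) \<Rightarrow> ('b \<times> 'b \<times> 'b \<Rightarrow> ('b \<Rightarrow>\<^sub>0 'r)) \<Rightarrow> bool" where
  "tsd_cond1 D T \<longleftrightarrow>
     lcomp (comult3 D) T
       = lcomp (tens3 T T T) (lcomp sigma9 (tens3 (comult3 D) (comult3 D) (comult3 D)))"

(* Basis of X^{\<otimes>5} is ('b \<times> 'b \<times> 'b) \<times> 'b \<times> 'b, i.e. ((x,y,z),w,u). *)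
definition tsd_cond2 :: "('b \<Rightarrow> ('b \<times> 'b \<Rightarrow>\<^sub>0 'r::comm_ring_1)) \<Rightarrow> ('b \<times> 'b \<times> 'b \<Rightarrow> ('b \<Rightarrow>\<^sub>0 'r)) \<Rightarrow> bool" where
  "tsd_cond2 D T \<longleftrightarrow>
     lcomp T (tens3 T idm idm)
       = lcomp T (lcomp (tens3 T T T) (lcomp sigma9 (tens3 idm (comult3 D) (comult3 D))))"

definition TSD :: "('b \<Rightarrow> ('b \<times> 'b \<Rightarrow>\<^sub>0 'r::comm_ring_1)) \<Rightarrow> ('b \<Rightarrow> 'r)
    \<Rightarrow> ('b \<times> 'b \<times> 'b \<Rightarrow> ('b \<Rightarrow>\<^sub>0 'r)) \<Rightarrow> bool" where
  "TSD D e T \<longleftrightarrow> coalgebra D e \<and> tsd_cond1 D T \<and> tsd_cond2 D T"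

definition extR :: "('i \<Rightarrow>\<^sub>0 'k::comm_ring_1) \<Rightarrow> ('i \<Rightarrow>\<^sub>0 'k dual)" where
  "extR v = Poly_Mapping.map scal v"

definition modh :: "('i \<Rightarrow>\<^sub>0 'k::comm_ring_1 dual) \<Rightarrow> ('i \<Rightarrow>\<^sub>0 'k)" where
  "modh v = Poly_Mapping.map re v"

definition DeltaR :: "('b \<Rightarrow> ('b \<times> 'b \<Rightarrow>\<^sub>0 'k::comm_ring_1)) \<Rightarrow> 'b \<Rightarrow> ('b \<times> 'b \<Rightarrow>\<^sub>0 'k dual)" where
  "DeltaR D = (\<lambda>b. extR (D b))"

definition epsR :: "('b \<Rightarrow> 'k::comm_ring_1) \<Rightarrow> 'b \<Rightarrow> 'k dual" where
  "epsR e = (\<lambda>b. scal (e b))"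

definition Tpsi :: "('b \<times> 'b \<times> 'b \<Rightarrow> ('b \<Rightarrow>\<^sub>0 'k::comm_ring_1)) \<Rightarrow> ('b \<times> 'b \<times> 'b \<Rightarrow> ('b \<Rightarrow>\<^sub>0 'k))
    \<Rightarrow> 'b \<times> 'b \<times> 'b \<Rightarrow> ('b \<Rightarrow>\<^sub>0 'k dual)" where
  "Tpsi T psi = (\<lambda>t. extR (T t) + smultp hbar (extR (psi t)))"

definition inf_deformation :: "('b \<Rightarrow> ('b \<times> 'b \<Rightarrow>\<^sub>0 'k::comm_ring_1)) \<Rightarrow> ('b \<Rightarrow> 'k)
    \<Rightarrow> ('b \<times> 'b \<times> 'b \<Rightarrow> ('b \<Rightarrow>\<^sub>0 'k)) \<Rightarrow> ('b \<times> 'b \<times> 'b \<Rightarrow> ('b \<Rightarrow>\<^sub>0 'k dual)) \<Rightarrow> bool" where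
  "inf_deformation D e T T' \<longleftrightarrow>
     (\<forall>t. modh (T' t) = T t) \<and> TSD (DeltaR D) (epsR e) T'"

definition deform_equiv :: "('b \<Rightarrow> ('b \<times> 'b \<Rightarrow>\<^sub>0 'k::comm_ring_1))
    \<Rightarrow> ('b \<times> 'b \<times> 'b \<Rightarrow> ('b \<Rightarrow>\<^sub>0 'k dual)) \<Rightarrow> ('b \<times> 'b \<times> 'b \<Rightarrow> ('b \<Rightarrow>\<^sub>0 'k dual)) \<Rightarrow> bool" where
  "deform_equiv D T' T'' \<longleftrightarrow>
     (\<exists>g :: 'b \<Rightarrow> ('b \<Rightarrow>\<^sub>0 'k dual).
        (\<forall>b. modh (g b) = idm b)
      \<and> lcomp (comult3 (DeltaR D)) g = lcomp (tens3 g g g) (comult3 (DeltaR D))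
      \<and> lcomp g T' = lcomp T'' (tens3 g g g))"

definition C1 :: "('b \<Rightarrow> ('b \<times> 'b \<Rightarrow>\<^sub>0 'k::comm_ring_1)) \<Rightarrow> ('b \<Rightarrow> ('b \<Rightarrow>\<^sub>0 'k)) \<Rightarrow> bool" where
  "C1 D f \<longleftrightarrow>
     lcomp (comult3 D) f
       = lcomp (\<lambda>t. tens3 f idm idm t + tens3 idm f idm t + tens3 idm idm f t) (comult3 D)"

definition C2 :: "('b \<Rightarrow> ('b \<times> 'b \<Rightarrow>\<^sub>0 'k::comm_ring_1)) \<Rightarrow> ('b \<times> 'b \<times> 'b \<Rightarrow> ('b \<Rightarrow>\<^sub>0 'k))
    \<Rightarrow> ('b \<times> 'b \<times> 'b \<Rightarrow> ('b \<Rightarrow>\<^sub>0 'k)) \<Rightarrow> bool" where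
  "C2 D T psi \<longleftrightarrow>
     lcomp (comult3 D) psi
       = lcomp (\<lambda>s. tens3 psi T T s + tens3 T psi T s + tens3 T T psi s)
           (lcomp sigma9 (tens3 (comult3 D) (comult3 D) (comult3 D)))"

definition delta1 :: "('b \<times> 'b \<times> 'b \<Rightarrow> ('b \<Rightarrow>\<^sub>0 'k::comm_ring_1)) \<Rightarrow> ('b \<Rightarrow> ('b \<Rightarrow>\<^sub>0 'k))
    \<Rightarrow> 'b \<times> 'b \<times> 'b \<Rightarrow> ('b \<Rightarrow>\<^sub>0 'k)" where
  "delta1 T f = (\<lambda>t. lcomp f T t - lcomp T (tens3 f idm idm) t
                      - lcomp T (tens3 idm f idm) t - lcomp T (tens3 idm idm f) t)"

definition delta2 :: "('b \<Rightarrow> ('b \<times> 'b \<Rightarrow>\<^sub>0 'k::comm_ring_1)) \<Rightarrow> ('b \<times> 'b \<times> 'b \<Rightarrow> ('b \<Rightarrow>\<^sub>0 'k))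
    \<Rightarrow> ('b \<times> 'b \<times> 'b \<Rightarrow> ('b \<Rightarrow>\<^sub>0 'k)) \<Rightarrow> ('b \<times> 'b \<times> 'b) \<times> 'b \<times> 'b \<Rightarrow> ('b \<Rightarrow>\<^sub>0 'k)" where
  "delta2 D T psi =
     (let P = lcomp sigma9 (tens3 idm (comult3 D) (comult3 D)) in
      (\<lambda>s. lcomp T (tens3 psi idm idm) s + lcomp psi (tens3 T idm idm) s
          - lcomp psi (lcomp (tens3 T T T) P) s
          - lcomp T (lcomp (tens3 psi T T) P) s
          - lcomp T (lcomp (tens3 T psi T) P) s
          - lcomp T (lcomp (tens3 T T psi) P) s))"

definition Z2 :: "('b \<Rightarrow> ('b \<times> 'b \<Rightarrow>\<^sub>0 'k::comm_ring_1)) \<Rightarrow> ('b \<times> 'b \<times> 'b \<Rightarrow> ('b \<Rightarrow>\<^sub>0 'k))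
    \<Rightarrow> ('b \<times> 'b \<times> 'b \<Rightarrow> ('b \<Rightarrow>\<^sub>0 'k)) set" where
  "Z2 D T = {psi. C2 D T psi \<and> (\<forall>s. delta2 D T psi s = 0)}"

definition B2 :: "('b \<Rightarrow> ('b \<times> 'b \<Rightarrow>\<^sub>0 'k::comm_ring_1)) \<Rightarrow> ('b \<times> 'b \<times> 'b \<Rightarrow> ('b \<Rightarrow>\<^sub>0 'k))
    \<Rightarrow> ('b \<times> 'b \<times> 'b \<Rightarrow> ('b \<Rightarrow>\<^sub>0 'k)) set" where
  "B2 D T = {delta1 T f | f. C1 D f}"

definition H2 :: "('b \<Rightarrow> ('b \<times> 'b \<Rightarrow>\<^sub>0 'k::comm_ring_1)) \<Rightarrow> ('b \<times> 'b \<times> 'b \<Rightarrow> ('b \<Rightarrow>\<^sub>0 'k))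
    \<Rightarrow> ('b \<times> 'b \<times> 'b \<Rightarrow> ('b \<Rightarrow>\<^sub>0 'k)) set set" where
  "H2 D T = Z2 D T // {(psi, psi'). psi \<in> Z2 D T \<and> psi' \<in> Z2 D T \<and> (\<lambda>t. psi t - psi' t) \<in> B2 D T}"

end

theory Submission
  imports Defs
begin

lemma lookup_map0: "g 0 = 0 \<Longrightarrow> Poly_Mapping.lookup (Poly_Mapping.map g p) k = g (Poly_Mapping.lookup p k)"
  by transfer (simp add: when_def)

lemma dual_add[simp]: "Dual a b + Dual c d = Dual (a + c) (b + d)" by (simp add: plus_dual_def)
lemma dual_mult[simp]: "Dual a b * Dual c d = Dual (a * c) (a * d + b * c)" by (simp add: times_dual_def)
lemma dual_zero: "(0::'a::comm_ring_1 dual) = Dual 0 0" by (simp add: zero_dual_def)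
lemma dual_one: "(1::'a::comm_ring_1 dual) = Dual 1 0" by (simp add: one_dual_def)
lemma re_zero[simp]: "re (0::'a::comm_ring_1 dual) = 0" by (simp add: zero_dual_def)
lemma ep_zero[simp]: "ep (0::'a::comm_ring_1 dual) = 0" by (simp add: zero_dual_def)
lemma re_add[simp]: "re (x + y) = re x + re (y::'a::comm_ring_1 dual)" by (simp add: plus_dual_def)
lemma ep_add[simp]: "ep (x + y) = ep x + ep (y::'a::comm_ring_1 dual)" by (simp add: plus_dual_def)
lemma re_sum: "re (sum f S) = (\<Sum>x\<in>S. re (f x :: 'a::comm_ring_1 dual))"
  by (induction S rule: infinite_finite_induct) auto
lemma ep_sum: "ep (sum f S) = (\<Sum>x\<in>S. ep (f x :: 'a::comm_ring_1 dual))"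
  by (induction S rule: infinite_finite_induct) auto

lemma sum_Dual: "(\<Sum>x\<in>S. Dual (f x) (g x)) = Dual (sum f S) (sum g S :: 'a::comm_ring_1)"
  by (induction S rule: infinite_finite_induct) (auto simp: dual_zero)

definition mkv :: "('i \<Rightarrow>\<^sub>0 'k::comm_ring_1) \<Rightarrow> ('i \<Rightarrow>\<^sub>0 'k) \<Rightarrow> ('i \<Rightarrow>\<^sub>0 'k dual)" where
  "mkv a b = extR a + smultp hbar (extR b)"

lemma lookup_mkv[simp]: "Poly_Mapping.lookup (mkv a b) i = Dual (Poly_Mapping.lookup a i) (Poly_Mapping.lookup b i)"
  unfolding mkv_def extR_def smultp_def
  by (simp add: lookup_add lookup_map0 scal_def hbar_def dual_zero)

lemma mkv_eq_iff[simp]: "mkv a b = mkv c d \<longleftrightarrow> a = c \<and> b = d"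
  by (auto simp: poly_mapping_eq_iff fun_eq_iff)

lemma mkv_decomp: "w = mkv (modh w) (Poly_Mapping.map ep w)"
  by (rule poly_mapping_eqI) (simp add: modh_def lookup_map0 dual.expand)

lemma modh_mkv[simp]: "modh (mkv a b) = a"
  by (rule poly_mapping_eqI) (simp add: modh_def lookup_map0)

lemma lookup_smultp[simp]: "Poly_Mapping.lookup (smultp c v) i = c * Poly_Mapping.lookup v i"
  by (simp add: smultp_def lookup_map0)

lemma lookup_lext_sup:
  assumes "finite S" "Poly_Mapping.keys v \<subseteq> S"
  shows "Poly_Mapping.lookup (lext f v) j = (\<Sum>i\<in>S. Poly_Mapping.lookup v i * Poly_Mapping.lookup (f i) j)"
  unfolding lext_def lookup_sum lookup_smultp
  by (rule sum.mono_neutral_left) (use assms in \<open>auto simp: in_keys_iff\<close>)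

lemma lookup_lext: "Poly_Mapping.lookup (lext f v) j = (\<Sum>i\<in>Poly_Mapping.keys v. Poly_Mapping.lookup v i * Poly_Mapping.lookup (f i) j)"
  by (rule lookup_lext_sup) auto

lemma keys_mkv: "Poly_Mapping.keys (mkv a b) \<subseteq> Poly_Mapping.keys a \<union> Poly_Mapping.keys b"
  by (auto simp: in_keys_iff dual_zero)

lemma lext_mkv: "lext (\<lambda>i. mkv (A i) (B i)) (mkv a b) = mkv (lext A a) (lext B a + lext A b)"
proof (rule poly_mapping_eqI)
  fix j
  let ?S = "Poly_Mapping.keys a \<union> Poly_Mapping.keys b"
  have f: "finite ?S" by simp
  show "Poly_Mapping.lookup (lext (\<lambda>i. mkv (A i) (B i)) (mkv a b)) j = Poly_Mapping.lookup (mkv (lext A a) (lext B a + lext A b)) j"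
    by (simp add: lookup_lext_sup[OF f keys_mkv] lookup_add lookup_lext_sup[OF f] sum_Dual sum.distrib)
qed

lemma sum_when_const: "(\<Sum>k\<in>K. (f k when P)) = ((\<Sum>k\<in>K. f k) when P)"
  by (cases P) (auto simp: when_def)

lemma sum_when_delta: "finite K \<Longrightarrow> (\<Sum>k\<in>K. (f k when c = k)) = (f c when c \<in> K)"
  by (simp add: when_def sum.delta)

lemma lookup_tvec3[simp]: "Poly_Mapping.lookup (tvec3 u v w) (a, b, c) =
   Poly_Mapping.lookup u a * Poly_Mapping.lookup v b * Poly_Mapping.lookup w c"
proof -
  have e: "((x::'z::zero) when (i, j, k) = (a, b, c)) = (((x when c = k) when b = j) when a = i)" for x i j k
    by (auto simp: when_def)
  have "Poly_Mapping.lookup (tvec3 u v w) (a, b, c) =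
    (\<Sum>i\<in>Poly_Mapping.keys u. \<Sum>j\<in>Poly_Mapping.keys v. \<Sum>k\<in>Poly_Mapping.keys w.
       (((Poly_Mapping.lookup u i * Poly_Mapping.lookup v j * Poly_Mapping.lookup w k when c = k) when b = j) when a = i))"
    unfolding tvec3_def lookup_sum lookup_single e ..
  also have "\<dots> = (((Poly_Mapping.lookup u a * Poly_Mapping.lookup v b * Poly_Mapping.lookup w c
      when c \<in> Poly_Mapping.keys w) when b \<in> Poly_Mapping.keys v) when a \<in> Poly_Mapping.keys u)"
    by (simp only: sum_when_const sum_when_delta finite_keys)
  also have "\<dots> = Poly_Mapping.lookup u a * Poly_Mapping.lookup v b * Poly_Mapping.lookup w c"
    by (auto simp: in_keys_iff when_def)
  finally show ?thesis .
qed

lemma lookup_tvec2[simp]: "Poly_Mapping.lookup (tvec2 u v) (a, b) =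
   Poly_Mapping.lookup u a * Poly_Mapping.lookup v b"
proof -
  have e: "((x::'z::zero) when (i, j) = (a, b)) = ((x when b = j) when a = i)" for x i j
    by (auto simp: when_def)
  have "Poly_Mapping.lookup (tvec2 u v) (a, b) =
    (\<Sum>i\<in>Poly_Mapping.keys u. \<Sum>j\<in>Poly_Mapping.keys v.
       ((Poly_Mapping.lookup u i * Poly_Mapping.lookup v j when b = j) when a = i))"
    unfolding tvec2_def lookup_sum lookup_single e ..
  also have "\<dots> = ((Poly_Mapping.lookup u a * Poly_Mapping.lookup v b
      when b \<in> Poly_Mapping.keys v) when a \<in> Poly_Mapping.keys u)"
    by (simp only: sum_when_const sum_when_delta finite_keys)
  also have "\<dots> = Poly_Mapping.lookup u a * Poly_Mapping.lookup v b"
    by (auto simp: in_keys_iff when_def)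
  finally show ?thesis .
qed


definition mk :: "('i \<Rightarrow> ('j \<Rightarrow>\<^sub>0 'k::comm_ring_1)) \<Rightarrow> ('i \<Rightarrow> ('j \<Rightarrow>\<^sub>0 'k)) \<Rightarrow> 'i \<Rightarrow> ('j \<Rightarrow>\<^sub>0 'k dual)" where
  "mk A B = (\<lambda>i. mkv (A i) (B i))"

lemma mk_eq_iff[simp]: "mk A B = mk C E \<longleftrightarrow> A = C \<and> B = E"
  by (auto simp: mk_def fun_eq_iff)

lemma lcomp_mk[simp]: "lcomp (mk A0 A1) (mk B0 B1) = mk (lcomp A0 B0) (\<lambda>i. lext A1 (B0 i) + lext A0 (B1 i))"
  by (simp add: lcomp_def mk_def lext_mkv[of A0 A1, unfolded mk_def])

lemma tens3_app[simp]: "tens3 F G H (a, b, c) = tvec3 (F a) (G b) (H c)"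
  by (simp add: tens3_def)

lemma tens2_app[simp]: "tens2 F G (a, b) = tvec2 (F a) (G b)"
  by (simp add: tens2_def)

lemma tvec3_mkv: "tvec3 (mkv a0 a1) (mkv b0 b1) (mkv c0 c1) =
   mkv (tvec3 a0 b0 c0) (tvec3 a1 b0 c0 + tvec3 a0 b1 c0 + tvec3 a0 b0 c1)"
  by (rule poly_mapping_eqI) (auto simp: lookup_add algebra_simps)

lemma tvec2_mkv: "tvec2 (mkv a0 a1) (mkv b0 b1) = mkv (tvec2 a0 b0) (tvec2 a1 b0 + tvec2 a0 b1)"
  by (rule poly_mapping_eqI) (auto simp: lookup_add algebra_simps)

lemma tens3_mk[simp]: "tens3 (mk A0 A1) (mk B0 B1) (mk E0 E1) =
  mk (tens3 A0 B0 E0) (\<lambda>t. tens3 A1 B0 E0 t + tens3 A0 B1 E0 t + tens3 A0 B0 E1 t)"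
  by (rule ext) (auto simp: mk_def tvec3_mkv)

lemma tens2_mk[simp]: "tens2 (mk A0 A1) (mk B0 B1) = mk (tens2 A0 B0) (\<lambda>t. tens2 A1 B0 t + tens2 A0 B1 t)"
  by (rule ext) (auto simp: mk_def tvec2_mkv)

lemma single_mkv: "Poly_Mapping.single i (1::'k::comm_ring_1 dual) = mkv (Poly_Mapping.single i 1) 0"
  by (rule poly_mapping_eqI) (simp add: lookup_single when_def dual_one dual_zero)

lemma idm_mk: "(idm :: 'i \<Rightarrow> ('i \<Rightarrow>\<^sub>0 'k::comm_ring_1 dual)) = mk idm (\<lambda>_. 0)"
  by (rule ext) (simp add: idm_def mk_def single_mkv)

lemma reidx_mk: "(reidx p :: 'i \<Rightarrow> ('j \<Rightarrow>\<^sub>0 'k::comm_ring_1 dual)) = mk (reidx p) (\<lambda>_. 0)"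
  by (rule ext) (simp add: reidx_def mk_def single_mkv)

lemma sigma9_mk: "(sigma9 :: _ \<Rightarrow> (_ \<Rightarrow>\<^sub>0 'k::comm_ring_1 dual)) = mk sigma9 (\<lambda>_. 0)"
  by (simp add: sigma9_def reidx_mk)

lemma extR_mkv: "extR a = mkv a 0"
  by (rule poly_mapping_eqI) (simp add: extR_def lookup_map0 scal_def dual_zero)

lemma DeltaR_mk: "DeltaR D = mk D (\<lambda>_. 0)"
  by (simp add: DeltaR_def mk_def extR_mkv)

lemma Tpsi_mk: "Tpsi T psi = mk T psi"
  by (simp add: Tpsi_def mk_def mkv_def)

lemma lext_zero_v[simp]: "lext F 0 = 0"
  by (simp add: lext_def)

lemma lext_zero_f[simp]: "lext (\<lambda>_. 0) v = 0"
  by (rule poly_mapping_eqI) (simp add: lookup_lext)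

lemma tvec3_zero[simp]: "tvec3 0 v w = 0" "tvec3 u 0 w = 0" "tvec3 u v 0 = 0"
  by (rule poly_mapping_eqI; auto)+

lemma tvec2_zero[simp]: "tvec2 0 v = 0" "tvec2 u 0 = 0"
  by (rule poly_mapping_eqI; auto)+

lemma tens3_zero[simp]: "tens3 (\<lambda>_. 0) G H t = 0" "tens3 F (\<lambda>_. 0) H t = 0" "tens3 F G (\<lambda>_. 0) t = 0"
  by (cases t; auto)+

lemma tens2_zero[simp]: "tens2 (\<lambda>_. 0) G t = 0" "tens2 F (\<lambda>_. 0) t = 0"
  by (cases t; auto)+

lemma comult3_mk: "comult3 (mk D (\<lambda>_. 0)) = mk (comult3 D) (\<lambda>_. 0)"
  by (simp add: comult3_def reidx_mk idm_mk)

lemma lext_add_f: "lext (\<lambda>i. F i + G i) v = lext F v + lext G v"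
  by (rule poly_mapping_eqI) (simp add: lookup_lext lookup_add algebra_simps sum.distrib)

lemma lext_neg_f: "lext (\<lambda>i. - F i) v = - lext F v"
  by (rule poly_mapping_eqI) (simp add: lookup_lext sum_negf)

lemma lext_add_v: "lext F (u + v) = lext F u + lext F v"
proof (rule poly_mapping_eqI)
  fix j
  let ?S = "Poly_Mapping.keys u \<union> Poly_Mapping.keys v"
  have f: "finite ?S" by simp
  show "Poly_Mapping.lookup (lext F (u + v)) j = Poly_Mapping.lookup (lext F u + lext F v) j"
    by (simp add: lookup_lext_sup[OF f keys_add] lookup_add lookup_lext_sup[OF f] algebra_simps sum.distrib)
qed

lemma lext_neg_v: "lext F (- v) = - lext F v"
proof -
  have "Poly_Mapping.keys (- v) = Poly_Mapping.keys v" by (auto simp: in_keys_iff)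
  then show ?thesis by (intro poly_mapping_eqI) (simp add: lookup_lext sum_negf)
qed

lemma tvec3_neg: "tvec3 (- a) b c = - tvec3 a b c" "tvec3 a (- b) c = - tvec3 a b c" "tvec3 a b (- c) = - tvec3 a b c"
  by (rule poly_mapping_eqI; auto)+

lemma lext_idm[simp]: "lext F (idm i) = F i"
  by (rule poly_mapping_eqI) (simp add: lookup_lext idm_def)

lemma lext_idm_f[simp]: "lext idm v = v"
proof (rule poly_mapping_eqI)
  fix k
  have "Poly_Mapping.lookup (lext idm v) k = (\<Sum>i\<in>Poly_Mapping.keys v. (Poly_Mapping.lookup v i when k = i))"
    by (simp add: lookup_lext idm_def lookup_single mult_when eq_commute)
  also have "\<dots> = Poly_Mapping.lookup v k"
    by (simp add: sum_when_delta) (auto simp: when_def in_keys_iff)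
  finally show "Poly_Mapping.lookup (lext idm v) k = Poly_Mapping.lookup v k" .
qed

lemma lcomp_idm_l[simp]: "lcomp idm F = F" and lcomp_idm_r[simp]: "lcomp F idm = F"
  by (simp_all add: lcomp_def fun_eq_iff)

lemma tens3_idm: "tens3 idm idm idm t = idm t"
  by (cases t) (auto intro!: poly_mapping_eqI simp: idm_def lookup_single when_def)

lemma smultp_mkv: "smultp (Dual c 0) (mkv a b) = mkv (smultp c a) (smultp c b)"
  by (rule poly_mapping_eqI) simp


lemma smultp_zero: "smultp c 0 = 0"
  by (rule poly_mapping_eqI) simp

lemma coalg_ext: "coalgebra (DeltaR D) (epsR e) \<longleftrightarrow> coalgebra D e"
proof -
  have c1: "(\<lambda>(i, j). smultp (epsR e i) (idm j)) = mk (\<lambda>(i, j). smultp (e i) (idm j)) (\<lambda>_. 0)"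
    by (rule ext) (auto simp: epsR_def scal_def idm_mk mk_def smultp_mkv smultp_zero)
  have c2: "(\<lambda>(i, j). smultp (epsR e j) (idm i)) = mk (\<lambda>(i, j). smultp (e j) (idm i)) (\<lambda>_. 0)"
    by (rule ext) (auto simp: epsR_def scal_def idm_mk mk_def smultp_mkv smultp_zero)
  show ?thesis
    unfolding coalgebra_def c1 c2 unfolding DeltaR_mk idm_mk reidx_mk by simp
qed

lemma cond1_ext: "tsd_cond1 (DeltaR D) (mk T psi) \<longleftrightarrow> tsd_cond1 D T \<and> C2 D T psi"
  unfolding tsd_cond1_def C2_def DeltaR_mk comult3_mk sigma9_mk
  by (simp add: lext_add_f) (simp add: lcomp_def fun_eq_iff lext_add_f)


lemma cond2_ext: "tsd_cond2 (DeltaR D) (mk T psi) \<longleftrightarrow> tsd_cond2 D T \<and> (\<forall>s. delta2 D T psi s = 0)"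
  unfolding tsd_cond2_def DeltaR_mk comult3_mk sigma9_mk idm_mk
  apply (simp add: lext_add_f)
  apply (simp add: lcomp_def fun_eq_iff lext_add_f lext_add_v delta2_def Let_def)
  by (simp add: algebra_simps)


lemma part1:
  assumes "TSD D e T"
  shows "inf_deformation D e T (Tpsi T psi) \<longleftrightarrow> psi \<in> Z2 D T"
  using assms unfolding inf_deformation_def TSD_def Tpsi_mk coalg_ext cond1_ext cond2_ext Z2_def
  by (simp add: mk_def)

lemma tens3_idm_fun: "tens3 idm idm idm = idm"
  by (rule ext) (rule tens3_idm)

lemma tens3_neg: "tens3 (\<lambda>b. - f b) G H t = - tens3 f G H t"
  "tens3 F (\<lambda>b. - f b) H t = - tens3 F f H t" "tens3 F G (\<lambda>b. - f b) t = - tens3 F G f t"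
  by (cases t; simp add: tvec3_neg)+

lemma equiv_a: "lcomp (comult3 (DeltaR D)) (mk idm f) = lcomp (tens3 (mk idm f) (mk idm f) (mk idm f)) (comult3 (DeltaR D))
   \<longleftrightarrow> C1 D f"
  unfolding DeltaR_mk comult3_mk C1_def
  by (simp add: tens3_idm_fun) (simp add: lcomp_def)

lemma eqlem: "(F + p = q + (A + B + C)) \<longleftrightarrow> (p - q = A - F + B + (C::'a::ab_group_add))"
  by (simp add: algebra_simps eq_diff_eq diff_eq_eq)

lemma equiv_b: "lcomp (mk idm f) (mk T psi) = lcomp (mk T psi') (tens3 (mk idm f) (mk idm f) (mk idm f))
   \<longleftrightarrow> (\<lambda>t. psi t - psi' t) = delta1 T (\<lambda>b. - f b)"
  unfolding delta1_def
  apply (simp add: tens3_idm_fun)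
  apply (simp add: lcomp_def fun_eq_iff tens3_neg lext_neg_v lext_neg_f lext_add_v)
  by (simp only: eqlem)

lemma lext_diff_f: "lext (\<lambda>i. F i - G i) v = lext F v - lext G v"
  by (rule poly_mapping_eqI) (simp add: lookup_lext lookup_minus algebra_simps sum_subtractf)

lemma eqlem2: "(- x = - a - b - c) \<longleftrightarrow> (x = a + b + (c::'a::ab_group_add))"
  by (auto simp: algebra_simps)

lemma C1_neg: "C1 D (\<lambda>b. - f b) \<longleftrightarrow> C1 D f"
  unfolding C1_def
  by (simp add: lcomp_def fun_eq_iff tens3_neg lext_neg_v lext_neg_f lext_add_f lext_add_v lext_diff_f eqlem2)

lemma part2: "deform_equiv D (Tpsi T psi) (Tpsi T psi') \<longleftrightarrow> (\<lambda>t. psi t - psi' t) \<in> B2 D T"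
proof
  assume "deform_equiv D (Tpsi T psi) (Tpsi T psi')"
  then obtain g where g1: "\<forall>b. modh (g b) = idm b"
    and g2: "lcomp (comult3 (DeltaR D)) g = lcomp (tens3 g g g) (comult3 (DeltaR D))"
    and g3: "lcomp g (mk T psi) = lcomp (mk T psi') (tens3 g g g)"
    unfolding deform_equiv_def Tpsi_mk by blast
  define f where "f = (\<lambda>b. Poly_Mapping.map ep (g b))"
  have gdef: "g = mk idm f"
    unfolding mk_def f_def
    by (rule ext) (metis g1 mkv_decomp)
  have "C1 D f" using g2 unfolding gdef equiv_a .
  moreover have "(\<lambda>t. psi t - psi' t) = delta1 T (\<lambda>b. - f b)" using g3 unfolding gdef equiv_b .
  ultimately show "(\<lambda>t. psi t - psi' t) \<in> B2 D T"
    unfolding B2_def using C1_neg by blast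
next
  assume "(\<lambda>t. psi t - psi' t) \<in> B2 D T"
  then obtain h where h1: "C1 D h" and h2: "(\<lambda>t. psi t - psi' t) = delta1 T h"
    unfolding B2_def by blast
  let ?g = "mk idm (\<lambda>b. - h b)"
  have "\<forall>b. modh (?g b) = idm b" by (simp add: mk_def)
  moreover have "lcomp (comult3 (DeltaR D)) ?g = lcomp (tens3 ?g ?g ?g) (comult3 (DeltaR D))"
    unfolding equiv_a C1_neg by (rule h1)
  moreover have "lcomp ?g (mk T psi) = lcomp (mk T psi') (tens3 ?g ?g ?g)"
    unfolding equiv_b minus_minus by (rule h2)
  ultimately show "deform_equiv D (Tpsi T psi) (Tpsi T psi')"
    unfolding deform_equiv_def Tpsi_mk by blast
qed


lemma quot_bij:
  assumes kb: "bij_betw k A B" and rA: "r \<subseteq> A \<times> A" and rB: "r' \<subseteq> B \<times> B"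
    and rel: "\<And>x y. x \<in> A \<Longrightarrow> y \<in> A \<Longrightarrow> (x, y) \<in> r \<longleftrightarrow> (k x, k y) \<in> r'"
  shows "bij_betw (\<lambda>S. k ` S) (A // r) (B // r')"
proof -
  have img: "k ` (r `` {x}) = r' `` {k x}" if x: "x \<in> A" for x
  proof
    show "k ` (r `` {x}) \<subseteq> r' `` {k x}"
    proof
      fix w assume "w \<in> k ` (r `` {x})"
      then obtain z where z: "(x, z) \<in> r" "w = k z" by blast
      with rA have "z \<in> A" by blast
      with z x rel show "w \<in> r' `` {k x}" by blast
    qed
  next
    show "r' `` {k x} \<subseteq> k ` (r `` {x})"
    proof
      fix w assume w: "w \<in> r' `` {k x}"
      then have "w \<in> B" using rB by blast
      then obtain z where z: "z \<in> A" "w = k z" using kb by (metis bij_betw_imp_surj_on imageE)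
      with w x rel show "w \<in> k ` (r `` {x})" by blast
    qed
  qed
  have sub: "S \<subseteq> A" if "S \<in> A // r" for S
    using that rA by (auto simp: quotient_def)
  have inj: "inj_on (\<lambda>S. k ` S) (A // r)"
  proof (rule inj_onI)
    fix S1 S2 assume "S1 \<in> A // r" "S2 \<in> A // r" "k ` S1 = k ` S2"
    then show "S1 = S2" using sub inj_on_image_eq_iff[OF bij_betw_imp_inj_on[OF kb]] by metis
  qed
  have "(\<lambda>S. k ` S) ` (A // r) = B // r'"
  proof -
    have "(\<lambda>S. k ` S) ` (A // r) = (\<lambda>x. r' `` {k x}) ` A"
      unfolding quotient_def using img by auto
    also have "\<dots> = (\<lambda>y. r' `` {y}) ` (k ` A)" by auto
    also have "\<dots> = B // r'" unfolding quotient_def using bij_betw_imp_surj_on[OF kb] by auto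
    finally show ?thesis .
  qed
  with inj show ?thesis unfolding bij_betw_def by blast
qed

lemma map_ep_mkv: "Poly_Mapping.map ep (mkv a b) = b"
  by (rule poly_mapping_eqI) (simp add: lookup_map0)


theorem mainTheorem3:
  fixes D :: "'b \<Rightarrow> ('b \<times> 'b \<Rightarrow>\<^sub>0 'k::field)"
    and e :: "'b \<Rightarrow> 'k"
    and T :: "'b \<times> 'b \<times> 'b \<Rightarrow> ('b \<Rightarrow>\<^sub>0 'k)"
  assumes "TSD D e T"
  shows "(\<forall>psi. inf_deformation D e T (Tpsi T psi) \<longleftrightarrow> psi \<in> Z2 D T)
       \<and> (\<forall>psi psi'. psi \<in> Z2 D T \<longrightarrow> psi' \<in> Z2 D T \<longrightarrow>
            (deform_equiv D (Tpsi T psi) (Tpsi T psi') \<longleftrightarrow> (\<lambda>t. psi t - psi' t) \<in> B2 D T))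
       \<and> (\<exists>\<Phi>. bij_betw \<Phi>
              ({T'. inf_deformation D e T T'} // {(T', T''). inf_deformation D e T T'
                    \<and> inf_deformation D e T T'' \<and> deform_equiv D T' T''})
              (H2 D T))"
proof (intro conjI allI impI)
  fix psi
  show "inf_deformation D e T (Tpsi T psi) \<longleftrightarrow> psi \<in> Z2 D T" using part1[OF assms] .
next
  fix psi psi' :: "'b \<times> 'b \<times> 'b \<Rightarrow> ('b \<Rightarrow>\<^sub>0 'k)"
  show "deform_equiv D (Tpsi T psi) (Tpsi T psi') \<longleftrightarrow> (\<lambda>t. psi t - psi' t) \<in> B2 D T"
    by (rule part2)
next
  define k where "k = (\<lambda>(T' :: 'b \<times> 'b \<times> 'b \<Rightarrow> ('b \<Rightarrow>\<^sub>0 'k dual)) t. Poly_Mapping.map ep (T' t))"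
  let ?A = "{T'. inf_deformation D e T T'}"
  let ?r = "{(T', T''). inf_deformation D e T T' \<and> inf_deformation D e T T'' \<and> deform_equiv D T' T''}"
  let ?r' = "{(psi, psi'). psi \<in> Z2 D T \<and> psi' \<in> Z2 D T \<and> (\<lambda>t. psi t - psi' t) \<in> B2 D T}"
  have defT: "T' = Tpsi T (k T')" if "inf_deformation D e T T'" for T'
  proof (rule ext)
    fix t
    have "modh (T' t) = T t" using that unfolding inf_deformation_def by blast
    then show "T' t = Tpsi T (k T') t"
      unfolding Tpsi_mk mk_def k_def using mkv_decomp by metis
  qed
  have kT: "k (Tpsi T psi) = psi" for psi
    unfolding k_def Tpsi_mk mk_def map_ep_mkv ..
  have p1: "inf_deformation D e T (Tpsi T psi) \<longleftrightarrow> psi \<in> Z2 D T" for psi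
    using part1[OF assms] .
  have kA: "k T' \<in> Z2 D T" if "T' \<in> ?A" for T'
    using that defT p1 by (metis mem_Collect_eq)
  have kb: "bij_betw k ?A (Z2 D T)"
  proof (rule bij_betw_byWitness[where f' = "Tpsi T"])
    show "\<forall>a\<in>?A. Tpsi T (k a) = a" using defT by auto
    show "\<forall>a'\<in>Z2 D T. k (Tpsi T a') = a'" using kT by auto
    show "k ` ?A \<subseteq> Z2 D T" using kA by auto
    show "Tpsi T ` Z2 D T \<subseteq> ?A" using p1 by auto
  qed
  have rel: "(x, y) \<in> ?r \<longleftrightarrow> (k x, k y) \<in> ?r'" if "x \<in> ?A" "y \<in> ?A" for x y
  proof -
    have "(x, y) \<in> ?r \<longleftrightarrow> deform_equiv D (Tpsi T (k x)) (Tpsi T (k y))"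
      using that defT by auto
    also have "\<dots> \<longleftrightarrow> (\<lambda>t. k x t - k y t) \<in> B2 D T" by (rule part2)
    also have "\<dots> \<longleftrightarrow> (k x, k y) \<in> ?r'" using kA that by auto
    finally show ?thesis .
  qed
  have "bij_betw (\<lambda>S. k ` S) (?A // ?r) (Z2 D T // ?r')"
    by (rule quot_bij[OF kb _ _ rel]) auto
  then show "\<exists>\<Phi>. bij_betw \<Phi> (?A // ?r) (H2 D T)"
    unfolding H2_def by blast
qed

end
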